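(* Let $(\mathfrak{S},\mathfrak{C})$ be a binary system with a finite simple set of connections $\mathfrak{C}=\{\{A_i,B_i\}:i\in\{1,\ldots,n\}\}$. Then the value $\Delta_{\min}(\mathfrak{S},\mathfrak{C})$ is achieved in some coupling $S$ of $\mathfrak{S}$, and $\Delta_{\min}(\mathfrak{S},\mathfrak{C})\ge\Delta_0(\mathfrak{C})$. The system has a (maximally) noncontextual description if and only if $\Delta_{\min}(\mathfrak{S},\mathfrak{C})=\Delta_0(\mathfrak{C})$.
   Context: A random bunch is a family of jointly distributed random variables. A binary system $(\mathfrak{S},\mathfrak{C})$ consists of a set $\mathfrak{S}$ of random bunches whose components are all $\pm1$-valued, pairwise componentwise stochastically unrelated (no component of one bunch is jointly distributed with a component of another), and a simple set $\mathfrak{C}$ of connections: pairwise disjoint pairs $\{A,B\}$ with $A$, $B$ components of two distinct bunches of $\mathfrak{S}$. A coupling of random variables (or bunches) $X,Y,\ldots$ is a jointly distributed family $(X^*,Y^*,\ldots)$ with $X^*$ distributed as $X$, $Y^*$ as $Y$, etc.; a coupling $S$ of $\mathfrak{S}$ is a coupling of all bunches in $\mathfrak{S}$; in it each connection $\{A_i,B_i\}$ is represented by the jointly distributed pair $(A_i^*,B_i^* )$. A coupling $(A^*,B^* )$ of $A,B$ is maximal if $\Pr[A^*=B^*]\ge\Pr[A^{**}=B^{**}]$ for every coupling $(A^{**},B^{**})$ of $A,B$. The system has a (maximally) noncontextual description if there is a coupling $S$ of $\mathfrak{S}$ in which every pair $(A_i^*,B_i^* )$ is a maximal coupling of $A_i,B_i$;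 otherwise it is contextual. $\Delta_0(\mathfrak{C})=\frac12\sum_{i=1}^n|\langle A_i\rangle-\langle B_i\rangle|$, with $\langle\cdot\rangle$ the expectation, and $\Delta_{\min}(\mathfrak{S},\mathfrak{C})$ is the infimum of $\sum_{i=1}^n\Pr[A_i^*\ne B_i^*]$ over all couplings $S$ of $\mathfrak{S}$. *)

theory Defs
  imports "HOL-Probability.Probability"
begin

text \<open>Bunches are labelled by elements of a set Bs (type 'b);
bunch b has component labels cmp b (type 'c); a component of the system is
the pair (b, c) with c in cmp b.  A random bunch is given by its joint
distribution P b, a probability measure on the space of +-1-valued
assignments to its components (distinct bunches are stochastically unrelated:
each has its own distribution and nothing is jointly distributed across them).\<close>

definition pm_space :: "'i set \<Rightarrow> ('i \<Rightarrow> int) measure" where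
  "pm_space I = PiM I (\<lambda>_. count_space {-1, 1})"

definition binary_system ::
  "'b set \<Rightarrow> ('b \<Rightarrow> 'c set) \<Rightarrow> ('b \<Rightarrow> ('c \<Rightarrow> int) measure)
   \<Rightarrow> (nat \<Rightarrow> 'b \<times> 'c) \<Rightarrow> (nat \<Rightarrow> 'b \<times> 'c) \<Rightarrow> nat \<Rightarrow> bool" where
  "binary_system Bs cmp P A B n \<longleftrightarrow>
     (\<forall>b\<in>Bs. prob_space (P b) \<and> sets (P b) = sets (pm_space (cmp b))) \<and>
     (\<forall>i<n. A i \<in> Sigma Bs cmp \<and> B i \<in> Sigma Bs cmp \<and> fst (A i) \<noteq> fst (B i)) \<and>
     (\<forall>i<n. \<forall>j<n. i \<noteq> j \<longrightarrow> {A i, B i} \<inter> {A j, B j} = {})"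

definition is_coupling ::
  "'b set \<Rightarrow> ('b \<Rightarrow> 'c set) \<Rightarrow> ('b \<Rightarrow> ('c \<Rightarrow> int) measure) \<Rightarrow> ('b \<times> 'c \<Rightarrow> int) measure \<Rightarrow> bool" where
  "is_coupling Bs cmp P S \<longleftrightarrow>
     prob_space S \<and> sets S = sets (pm_space (Sigma Bs cmp)) \<and>
     (\<forall>b\<in>Bs. distr S (pm_space (cmp b)) (\<lambda>\<omega>. \<lambda>c\<in>cmp b. \<omega> (b, c)) = P b)"

definition comp_dist :: "('b \<Rightarrow> ('c \<Rightarrow> int) measure) \<Rightarrow> 'b \<times> 'c \<Rightarrow> int measure" where
  "comp_dist P x = distr (P (fst x)) (count_space {-1, 1}) (\<lambda>\<omega>. \<omega> (snd x))"

definition comp_expect :: "('b \<Rightarrow> ('c \<Rightarrow> int) measure) \<Rightarrow> 'b \<times> 'c \<Rightarrow> real" where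
  "comp_expect P x = (\<integral>\<omega>. real_of_int (\<omega> (snd x)) \<partial>(P (fst x)))"

definition pair_coupling :: "int measure \<Rightarrow> int measure \<Rightarrow> (int \<times> int) measure \<Rightarrow> bool" where
  "pair_coupling mA mB Q \<longleftrightarrow>
     prob_space Q \<and> sets Q = sets (count_space ({-1, 1} \<times> {-1, 1})) \<and>
     distr Q (count_space {-1, 1}) fst = mA \<and> distr Q (count_space {-1, 1}) snd = mB"

definition maximal_coupling :: "int measure \<Rightarrow> int measure \<Rightarrow> (int \<times> int) measure \<Rightarrow> bool" where
  "maximal_coupling mA mB Q \<longleftrightarrow>
     pair_coupling mA mB Q \<and>
     (\<forall>Q'. pair_coupling mA mB Q' \<longrightarrow>
        measure Q' {p \<in> space Q'. fst p = snd p} \<le> measure Q {p \<in> space Q. fst p = snd p})"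

definition pair_dist :: "('b \<times> 'c \<Rightarrow> int) measure \<Rightarrow> 'b \<times> 'c \<Rightarrow> 'b \<times> 'c \<Rightarrow> (int \<times> int) measure" where
  "pair_dist S a b = distr S (count_space ({-1, 1} \<times> {-1, 1})) (\<lambda>\<omega>. (\<omega> a, \<omega> b))"

definition noncontextual ::
  "'b set \<Rightarrow> ('b \<Rightarrow> 'c set) \<Rightarrow> ('b \<Rightarrow> ('c \<Rightarrow> int) measure)
   \<Rightarrow> (nat \<Rightarrow> 'b \<times> 'c) \<Rightarrow> (nat \<Rightarrow> 'b \<times> 'c) \<Rightarrow> nat \<Rightarrow> bool" where
  "noncontextual Bs cmp P A B n \<longleftrightarrow>
     (\<exists>S. is_coupling Bs cmp P S \<and>
        (\<forall>i<n. maximal_coupling (comp_dist P (A i)) (comp_dist P (B i)) (pair_dist S (A i) (B i))))"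

definition mismatch :: "('b \<times> 'c \<Rightarrow> int) measure \<Rightarrow> (nat \<Rightarrow> 'b \<times> 'c) \<Rightarrow> (nat \<Rightarrow> 'b \<times> 'c) \<Rightarrow> nat \<Rightarrow> real" where
  "mismatch S A B n = (\<Sum>i<n. measure S {\<omega> \<in> space S. \<omega> (A i) \<noteq> \<omega> (B i)})"

definition Delta_min ::
  "'b set \<Rightarrow> ('b \<Rightarrow> 'c set) \<Rightarrow> ('b \<Rightarrow> ('c \<Rightarrow> int) measure)
   \<Rightarrow> (nat \<Rightarrow> 'b \<times> 'c) \<Rightarrow> (nat \<Rightarrow> 'b \<times> 'c) \<Rightarrow> nat \<Rightarrow> real" where
  "Delta_min Bs cmp P A B n = (INF S \<in> {S. is_coupling Bs cmp P S}. mismatch S A B n)"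

definition Delta0 :: "('b \<Rightarrow> ('c \<Rightarrow> int) measure) \<Rightarrow> (nat \<Rightarrow> 'b \<times> 'c) \<Rightarrow> (nat \<Rightarrow> 'b \<times> 'c) \<Rightarrow> nat \<Rightarrow> real" where
  "Delta0 P A B n = (1/2) * (\<Sum>i<n. \<bar>comp_expect P (A i) - comp_expect P (B i)\<bar>)"

end

theory Submission
  imports Defs
begin


lemma sub2: "X \<subseteq> {a,b} \<Longrightarrow> X = {} \<or> X = {a} \<or> X = {b} \<or> X = {a,b}"
  by auto

lemma pm1_measure_eq:
  assumes pM: "prob_space M" and pN: "prob_space N"
    and sM: "sets M = sets (count_space {-1,1::int})" and sN: "sets N = sets (count_space {-1,1::int})"
    and eq: "measure M {1} = measure N {1}"
  shows "M = N"
proof (rule measure_eqI)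
  show "sets M = sets N" using sM sN by simp
  have spM: "space M = {-1,1}" using sets_eq_imp_space_eq[OF sM] by simp
  have spN: "space N = {-1,1}" using sets_eq_imp_space_eq[OF sN] by simp
  have c1: "{-1::int,1} - {1} = {-1}" by auto
  have mM: "measure M {-1} = 1 - measure M {1}"
    using prob_space.prob_compl[OF pM, of "{1}"] sM spM c1 by simp
  have mN: "measure N {-1} = 1 - measure N {1}"
    using prob_space.prob_compl[OF pN, of "{1}"] sN spN c1 by simp
  fix X assume "X \<in> sets M"
  hence X: "X \<subseteq> {-1,1}" using sM by simp
  have "measure M X = measure N X"
    using sub2[OF X] proof (elim disjE)
    assume "X = {-1,1}" thus ?thesis
      using prob_space.prob_space[OF pM] prob_space.prob_space[OF pN] spM spN by simp
  qed (use eq mM mN in auto)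
  thus "emeasure M X = emeasure N X"
    using finite_measure.emeasure_eq_measure[OF prob_space.finite_measure[OF pM]]
      finite_measure.emeasure_eq_measure[OF prob_space.finite_measure[OF pN]] by simp
qed

lemma pc_basic:
  assumes "pair_coupling mA mB Q"
  shows "space Q = {-1,1} \<times> {-1,1}" "prob_space Q"
    "measure mA {1} = measure Q {p\<in>space Q. fst p = 1}"
    "measure mB {1} = measure Q {p\<in>space Q. snd p = 1}"
proof -
  have sQ: "sets Q = sets (count_space ({-1,1::int} \<times> {-1,1::int}))" and pQ: "prob_space Q"
    and dA: "distr Q (count_space {-1,1}) fst = mA" and dB: "distr Q (count_space {-1,1}) snd = mB"
    using assms unfolding pair_coupling_def by auto
  show spQ: "space Q = {-1,1} \<times> {-1,1}" using sets_eq_imp_space_eq[OF sQ] by simp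
  show "prob_space Q" by fact
  have mf: "fst \<in> measurable Q (count_space {-1,1::int})"
    unfolding measurable_cong_sets[OF sQ refl] by (auto simp: Pi_iff)
  have ms: "snd \<in> measurable Q (count_space {-1,1::int})"
    unfolding measurable_cong_sets[OF sQ refl] by (auto simp: Pi_iff)
  have "measure mA {1} = measure Q (fst -` {1} \<inter> space Q)"
    using measure_distr[OF mf, of "{1}"] dA by simp
  also have "fst -` {1} \<inter> space Q = {p\<in>space Q. fst p = 1}" by auto
  finally show "measure mA {1} = measure Q {p\<in>space Q. fst p = 1}" .
  have "measure mB {1} = measure Q (snd -` {1} \<inter> space Q)"
    using measure_distr[OF ms, of "{1}"] dB by simp
  also have "snd -` {1} \<inter> space Q = {p\<in>space Q. snd p = 1}" by auto
  finally show "measure mB {1} = measure Q {p\<in>space Q. snd p = 1}" .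
qed

lemma pc_bound:
  assumes "pair_coupling mA mB Q"
  shows "\<bar>measure mA {1} - measure mB {1}\<bar> \<le> measure Q {p \<in> space Q. fst p \<noteq> snd p}"
proof -
  note b = pc_basic[OF assms]
  interpret Q: prob_space Q by (rule b(2))
  have sQ: "sets Q = Pow (space Q)"
    using assms b(1) unfolding pair_coupling_def by simp
  let ?X = "{p\<in>space Q. fst p = 1}" and ?Y = "{p\<in>space Q. snd p = 1}"
    and ?D = "{p \<in> space Q. fst p \<noteq> snd p}"
  have "?X \<subseteq> ?Y \<union> ?D" by auto
  hence "Q.prob ?X \<le> Q.prob (?Y \<union> ?D)" by (intro Q.finite_measure_mono) (auto simp: sQ)
  also have "\<dots> \<le> Q.prob ?Y + Q.prob ?D" by (intro measure_subadditive) (auto simp: sQ)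
  finally have 1: "Q.prob ?X \<le> Q.prob ?Y + Q.prob ?D" .
  have "?Y \<subseteq> ?X \<union> ?D" by auto
  hence "Q.prob ?Y \<le> Q.prob (?X \<union> ?D)" by (intro Q.finite_measure_mono) (auto simp: sQ)
  also have "\<dots> \<le> Q.prob ?X + Q.prob ?D" by (intro measure_subadditive) (auto simp: sQ)
  finally have 2: "Q.prob ?Y \<le> Q.prob ?X + Q.prob ?D" .
  show ?thesis using 1 2 b(3,4) by linarith
qed

lemma pc_eq_compl:
  assumes "pair_coupling mA mB Q"
  shows "measure Q {p \<in> space Q. fst p = snd p} = 1 - measure Q {p \<in> space Q. fst p \<noteq> snd p}"
proof -
  note b = pc_basic[OF assms]
  interpret Q: prob_space Q by (rule b(2))
  have sQ: "sets Q = Pow (space Q)"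
    using assms b(1) unfolding pair_coupling_def by simp
  have "space Q - {p \<in> space Q. fst p \<noteq> snd p} = {p \<in> space Q. fst p = snd p}" by auto
  thus ?thesis using Q.prob_compl[of "{p \<in> space Q. fst p \<noteq> snd p}"] sQ by auto
qed



lemma pm1_basic:
  assumes "prob_space M" "sets M = sets (count_space {-1,1::int})"
  shows "0 \<le> measure M {1}" "measure M {1} \<le> 1" "measure M {-1} = 1 - measure M {1}"
proof -
  interpret prob_space M by fact
  have sp: "space M = {-1,1}" using sets_eq_imp_space_eq[OF assms(2)] by simp
  have c1: "{-1::int,1} - {1} = {-1}" by auto
  show "0 \<le> measure M {1}" by simp
  show "measure M {1} \<le> 1" by simp
  show "measure M {-1} = 1 - measure M {1}"
    using prob_compl[of "{1}"] assms(2) sp c1 by simp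
qed

definition wopt :: "real \<Rightarrow> real \<Rightarrow> int \<times> int \<Rightarrow> real" where
  "wopt a b p = (if p = (1,1) then min a b else if p = (-1,-1) then min (1-a) (1-b)
     else if p = (1,-1) then a - min a b else b - min a b)"

lemma pc_exists:
  assumes pA: "prob_space mA" "sets mA = sets (count_space {-1,1::int})"
    and pB: "prob_space mB" "sets mB = sets (count_space {-1,1::int})"
  shows "\<exists>Q. pair_coupling mA mB Q \<and>
      measure Q {p \<in> space Q. fst p \<noteq> snd p} = \<bar>measure mA {1} - measure mB {1}\<bar>"
proof -
  define a where "a = measure mA {1}"
  define b where "b = measure mB {1}"
  have a01: "0 \<le> a" "a \<le> 1" using pm1_basic[OF pA] a_def by auto
  have b01: "0 \<le> b" "b \<le> 1" using pm1_basic[OF pB] b_def by auto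
  define D where "D = ({-1,1::int} \<times> {-1,1::int})"
  have finD: "finite D" by (simp add: D_def)
  have wnn: "\<And>p. 0 \<le> wopt a b p" using a01 b01 by (auto simp: wopt_def)
  define Q where "Q = point_measure D (\<lambda>p. ennreal (wopt a b p))"
  have spQ: "space Q = D" by (simp add: Q_def space_point_measure)
  have sQ: "sets Q = sets (count_space D)" by (simp add: Q_def sets_point_measure)
  have mQ: "measure Q X = sum (wopt a b) X" if "X \<subseteq> D" for X
  proof -
    have "emeasure Q X = (\<Sum>p\<in>X. ennreal (wopt a b p))"
      unfolding Q_def using finD that by (rule emeasure_point_measure_finite)
    also have "\<dots> = ennreal (sum (wopt a b) X)" using wnn by (simp add: sum_ennreal)
    finally show ?thesis using wnn by (simp add: measure_def sum_nonneg)
  qed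
  have DD: "D = {(1,1),(-1,-1),(1,-1),(-1,1)}" by (auto simp: D_def)
  have pQ: "prob_space Q"
  proof
    have "emeasure Q (space Q) = (\<Sum>p\<in>D. ennreal (wopt a b p))"
      unfolding spQ unfolding Q_def using finD by (intro emeasure_point_measure_finite) auto
    also have "\<dots> = ennreal (sum (wopt a b) D)" using wnn by (simp add: sum_ennreal)
    also have "sum (wopt a b) D = 1" by (simp add: DD wopt_def)
    finally show "emeasure Q (space Q) = 1" by simp
  qed
  interpret Q: prob_space Q by fact
  have mf: "fst \<in> measurable Q (count_space {-1,1::int})"
    unfolding measurable_cong_sets[OF sQ refl] by (auto simp: Pi_iff D_def)
  have ms: "snd \<in> measurable Q (count_space {-1,1::int})"
    unfolding measurable_cong_sets[OF sQ refl] by (auto simp: Pi_iff D_def)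
  have dA: "distr Q (count_space {-1,1}) fst = mA"
  proof (rule pm1_measure_eq)
    show "prob_space (distr Q (count_space {-1, 1}) fst)" by (rule Q.prob_space_distr[OF mf])
    have "measure (distr Q (count_space {-1, 1}) fst) {1} = measure Q (fst -` {1} \<inter> space Q)"
      by (rule measure_distr[OF mf]) simp
    also have "fst -` {1} \<inter> space Q = {(1,1),(1,-1)}" by (auto simp: spQ D_def)
    also have "measure Q {(1,1),(1,-1)} = a" by (subst mQ) (auto simp: D_def wopt_def)
    finally show "measure (distr Q (count_space {-1, 1}) fst) {1} = measure mA {1}" by (simp add: a_def)
  qed (use pA in auto)
  have dB: "distr Q (count_space {-1,1}) snd = mB"
  proof (rule pm1_measure_eq)
    show "prob_space (distr Q (count_space {-1, 1}) snd)" by (rule Q.prob_space_distr[OF ms])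
    have "measure (distr Q (count_space {-1, 1}) snd) {1} = measure Q (snd -` {1} \<inter> space Q)"
      by (rule measure_distr[OF ms]) simp
    also have "snd -` {1} \<inter> space Q = {(1,1),(-1,1)}" by (auto simp: spQ D_def)
    also have "measure Q {(1,1),(-1,1)} = b" by (subst mQ) (auto simp: D_def wopt_def)
    finally show "measure (distr Q (count_space {-1, 1}) snd) {1} = measure mB {1}" by (simp add: b_def)
  qed (use pB in auto)
  have "{p \<in> space Q. fst p \<noteq> snd p} = {(1,-1),(-1,1)}" by (auto simp: spQ D_def)
  moreover have "measure Q {(1,-1),(-1,1)} = \<bar>a - b\<bar>" by (subst mQ) (auto simp: D_def wopt_def)
  ultimately have "measure Q {p \<in> space Q. fst p \<noteq> snd p} = \<bar>a - b\<bar>" by simp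
  moreover have "pair_coupling mA mB Q"
    unfolding pair_coupling_def using pQ sQ dA dB by (simp add: D_def)
  ultimately show ?thesis by (auto simp: a_def b_def)
qed

lemma maximal_iff:
  assumes pA: "prob_space mA" "sets mA = sets (count_space {-1,1::int})"
    and pB: "prob_space mB" "sets mB = sets (count_space {-1,1::int})"
  shows "maximal_coupling mA mB Q \<longleftrightarrow> pair_coupling mA mB Q \<and>
      measure Q {p \<in> space Q. fst p \<noteq> snd p} = \<bar>measure mA {1} - measure mB {1}\<bar>"
proof
  assume m: "maximal_coupling mA mB Q"
  hence pc: "pair_coupling mA mB Q" by (simp add: maximal_coupling_def)
  obtain Q' where Q': "pair_coupling mA mB Q'"
      "measure Q' {p \<in> space Q'. fst p \<noteq> snd p} = \<bar>measure mA {1} - measure mB {1}\<bar>"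
    using pc_exists[OF pA pB] by blast
  have "measure Q' {p \<in> space Q'. fst p = snd p} \<le> measure Q {p \<in> space Q. fst p = snd p}"
    using m Q'(1) by (simp add: maximal_coupling_def)
  hence "measure Q {p \<in> space Q. fst p \<noteq> snd p} \<le> \<bar>measure mA {1} - measure mB {1}\<bar>"
    using pc_eq_compl[OF pc] pc_eq_compl[OF Q'(1)] Q'(2) by linarith
  thus "pair_coupling mA mB Q \<and>
      measure Q {p \<in> space Q. fst p \<noteq> snd p} = \<bar>measure mA {1} - measure mB {1}\<bar>"
    using pc pc_bound[OF pc] by linarith
next
  assume a: "pair_coupling mA mB Q \<and>
      measure Q {p \<in> space Q. fst p \<noteq> snd p} = \<bar>measure mA {1} - measure mB {1}\<bar>"
  show "maximal_coupling mA mB Q"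
    unfolding maximal_coupling_def
  proof (intro conjI allI impI)
    show "pair_coupling mA mB Q" using a by simp
    fix Q' assume Q': "pair_coupling mA mB Q'"
    show "measure Q' {p \<in> space Q'. fst p = snd p} \<le> measure Q {p \<in> space Q. fst p = snd p}"
      using pc_eq_compl[OF Q'] pc_eq_compl[of mA mB Q] a pc_bound[OF Q'] by linarith
  qed
qed



lemma space_pm: "space (pm_space I) = PiE I (\<lambda>_. {-1,1::int})"
  by (simp add: pm_space_def space_PiM)

lemma pm_cyl_sets:
  assumes "finite J" "J \<subseteq> I"
  shows "{\<omega>\<in>space (pm_space I). \<forall>j\<in>J. \<omega> j = w j} \<in> sets (pm_space I)"
proof -
  have "{\<omega>\<in>space (pm_space I). \<forall>j\<in>J. \<omega> j = w j} =
     prod_emb I (\<lambda>_. count_space {-1,1::int}) J (PiE J (\<lambda>j. {w j} \<inter> {-1,1}))"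
    using assms unfolding pm_space_def prod_emb_def by (auto simp: space_PiM PiE_iff extensional_def) (metis subsetD)
  also have "\<dots> \<in> sets (pm_space I)" unfolding pm_space_def
    using assms by (intro sets_PiM_I) auto
  finally show ?thesis .
qed

locale bsys =
  fixes Bs :: "'b set" and cmp :: "'b \<Rightarrow> 'c set"
    and P :: "'b \<Rightarrow> ('c \<Rightarrow> int) measure"
    and A B :: "nat \<Rightarrow> 'b \<times> 'c" and n :: nat
  assumes bs: "binary_system Bs cmp P A B n"
begin

lemma Pb: assumes "b \<in> Bs"
  shows "prob_space (P b)" "sets (P b) = sets (pm_space (cmp b))"
    "space (P b) = PiE (cmp b) (\<lambda>_. {-1,1})"
proof -
  show "prob_space (P b)" "sets (P b) = sets (pm_space (cmp b))"
    using bs assms unfolding binary_system_def by auto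
  thus "space (P b) = PiE (cmp b) (\<lambda>_. {-1,1})"
    using sets_eq_imp_space_eq space_pm by metis
qed

lemma AB: assumes "i < n"
  shows "A i \<in> Sigma Bs cmp" "B i \<in> Sigma Bs cmp" "A i \<noteq> B i"
  using bs assms unfolding binary_system_def by auto

abbreviation "Pm \<equiv> pm_space (Sigma Bs cmp)"

lemma coupling_basic:
  assumes "is_coupling Bs cmp P S"
  shows "prob_space S" "sets S = sets Pm" "space S = PiE (Sigma Bs cmp) (\<lambda>_. {-1,1})"
    "\<And>b. b \<in> Bs \<Longrightarrow> distr S (pm_space (cmp b)) (\<lambda>\<omega>. \<lambda>c\<in>cmp b. \<omega> (b, c)) = P b"
proof -
  show "prob_space S" "sets S = sets Pm"
    "\<And>b. b \<in> Bs \<Longrightarrow> distr S (pm_space (cmp b)) (\<lambda>\<omega>. \<lambda>c\<in>cmp b. \<omega> (b, c)) = P b"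
    using assms unfolding is_coupling_def by auto
  thus "space S = PiE (Sigma Bs cmp) (\<lambda>_. {-1,1})"
    using sets_eq_imp_space_eq space_pm by metis
qed

lemma comp_meas:
  assumes "sets S = sets Pm" "x \<in> Sigma Bs cmp"
  shows "(\<lambda>\<omega>. \<omega> x) \<in> measurable S (count_space {-1,1::int})"
  unfolding measurable_cong_sets[OF assms(1) refl] pm_space_def
  using assms(2) by (rule measurable_component_singleton)

lemma proj_meas:
  assumes "sets S = sets Pm" "b \<in> Bs"
  shows "(\<lambda>\<omega>. \<lambda>c\<in>cmp b. \<omega> (b, c)) \<in> measurable S (pm_space (cmp b))"
  unfolding pm_space_def
  by (rule measurable_restrict) (use comp_meas[OF assms(1)] assms(2) in auto)

lemma Pb_comp_meas:
  assumes "b \<in> Bs" "c \<in> cmp b"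
  shows "(\<lambda>\<omega>. \<omega> c) \<in> measurable (P b) (count_space {-1,1::int})"
  unfolding measurable_cong_sets[OF Pb(2)[OF assms(1)] refl] pm_space_def
  using assms(2) by (rule measurable_component_singleton)

lemma comp_dist_basic:
  assumes "x \<in> Sigma Bs cmp"
  shows "prob_space (comp_dist P x)" "sets (comp_dist P x) = sets (count_space {-1,1::int})"
proof -
  obtain b c where x: "x = (b,c)" "b \<in> Bs" "c \<in> cmp b" using assms by auto
  show "prob_space (comp_dist P x)" unfolding comp_dist_def x
    using prob_space.prob_space_distr[OF Pb(1)[OF x(2)] Pb_comp_meas[OF x(2,3)]] by simp
  show "sets (comp_dist P x) = sets (count_space {-1,1::int})" by (simp add: comp_dist_def)
qed

lemma coupling_comp:
  assumes S: "is_coupling Bs cmp P S" and x: "x \<in> Sigma Bs cmp"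
  shows "distr S (count_space {-1,1}) (\<lambda>\<omega>. \<omega> x) = comp_dist P x"
proof -
  obtain b c where x: "x = (b,c)" "b \<in> Bs" "c \<in> cmp b" using x by auto
  note cb = coupling_basic[OF S]
  have "comp_dist P x = distr (distr S (pm_space (cmp b)) (\<lambda>\<omega>. \<lambda>c\<in>cmp b. \<omega> (b, c)))
          (count_space {-1,1}) (\<lambda>\<omega>. \<omega> c)"
    using cb(4)[OF x(2)] by (simp add: comp_dist_def x)
  also have "\<dots> = distr S (count_space {-1,1}) ((\<lambda>\<omega>. \<omega> c) \<circ> (\<lambda>\<omega>. \<lambda>c\<in>cmp b. \<omega> (b, c)))"
    by (rule distr_distr)
       (use Pb_comp_meas[OF x(2,3)] Pb(2)[OF x(2)] proj_meas[OF cb(2) x(2)] in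
         \<open>auto simp: measurable_cong_sets[OF Pb(2)[OF x(2)] refl]\<close>)
  also have "(\<lambda>\<omega>. \<omega> c) \<circ> (\<lambda>\<omega>. \<lambda>c\<in>cmp b. \<omega> (b, c)) = (\<lambda>\<omega>. \<omega> x)"
    using x by auto
  finally show ?thesis by simp
qed

lemma pair_meas:
  assumes "sets S = sets Pm" "x \<in> Sigma Bs cmp" "y \<in> Sigma Bs cmp"
  shows "(\<lambda>\<omega>. (\<omega> x, \<omega> y)) \<in> measurable S (count_space ({-1,1::int} \<times> {-1,1::int}))"
proof -
  have "(\<lambda>\<omega>. (\<omega> x, \<omega> y)) \<in> measurable S (count_space {-1,1::int} \<Otimes>\<^sub>M count_space {-1,1::int})"
    by (rule measurable_Pair) (use comp_meas[OF assms(1)] assms in auto)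
  thus ?thesis by (simp add: pair_measure_countable)
qed

lemma pair_dist_pc:
  assumes S: "is_coupling Bs cmp P S" and x: "x \<in> Sigma Bs cmp" and y: "y \<in> Sigma Bs cmp"
  shows "pair_coupling (comp_dist P x) (comp_dist P y) (pair_dist S x y)"
    "measure (pair_dist S x y) {p \<in> space (pair_dist S x y). fst p \<noteq> snd p}
       = measure S {\<omega> \<in> space S. \<omega> x \<noteq> \<omega> y}"
proof -
  note cb = coupling_basic[OF S]
  note pm = pair_meas[OF cb(2) x y]
  have mf: "fst \<in> measurable (count_space ({-1,1::int} \<times> {-1,1::int})) (count_space {-1,1::int})"
    by auto
  have ms: "snd \<in> measurable (count_space ({-1,1::int} \<times> {-1,1::int})) (count_space {-1,1::int})"
    by auto
  have "distr (pair_dist S x y) (count_space {-1,1}) fst = distr S (count_space {-1,1}) (fst \<circ> (\<lambda>\<omega>. (\<omega> x, \<omega> y)))"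
    unfolding pair_dist_def by (rule distr_distr[OF mf pm])
  also have "\<dots> = comp_dist P x" using coupling_comp[OF S x] by (simp add: comp_def)
  finally have d1: "distr (pair_dist S x y) (count_space {-1,1}) fst = comp_dist P x" .
  have "distr (pair_dist S x y) (count_space {-1,1}) snd = distr S (count_space {-1,1}) (snd \<circ> (\<lambda>\<omega>. (\<omega> x, \<omega> y)))"
    unfolding pair_dist_def by (rule distr_distr[OF ms pm])
  also have "\<dots> = comp_dist P y" using coupling_comp[OF S y] by (simp add: comp_def)
  finally have d2: "distr (pair_dist S x y) (count_space {-1,1}) snd = comp_dist P y" .
  show "pair_coupling (comp_dist P x) (comp_dist P y) (pair_dist S x y)"
    unfolding pair_coupling_def using d1 d2 prob_space.prob_space_distr[OF cb(1) pm]
    by (simp add: pair_dist_def)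
  have "measure (pair_dist S x y) {p \<in> space (pair_dist S x y). fst p \<noteq> snd p}
      = measure S ((\<lambda>\<omega>. (\<omega> x, \<omega> y)) -` {p \<in> space (pair_dist S x y). fst p \<noteq> snd p} \<inter> space S)"
    unfolding pair_dist_def by (rule measure_distr[OF pm]) auto
  also have "(\<lambda>\<omega>. (\<omega> x, \<omega> y)) -` {p \<in> space (pair_dist S x y). fst p \<noteq> snd p} \<inter> space S
      = {\<omega> \<in> space S. \<omega> x \<noteq> \<omega> y}"
  proof -
    have "\<And>\<omega>. \<omega> \<in> space S \<Longrightarrow> \<omega> x \<in> {-1,1} \<and> \<omega> y \<in> {-1,1}"
      using x y unfolding cb(3) by auto
    thus ?thesis by (auto simp: pair_dist_def)
  qed
  finally show "measure (pair_dist S x y) {p \<in> space (pair_dist S x y). fst p \<noteq> snd p}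
       = measure S {\<omega> \<in> space S. \<omega> x \<noteq> \<omega> y}" .
qed

lemma comp_expect_eq:
  assumes x: "x \<in> Sigma Bs cmp"
  shows "comp_expect P x = 2 * measure (comp_dist P x) {1} - 1"
proof -
  obtain b c where x: "x = (b,c)" "b \<in> Bs" "c \<in> cmp b" using x by auto
  interpret Pb: prob_space "P b" by (rule Pb(1)[OF x(2)])
  define E where "E = {\<omega>\<in>space (P b). \<omega> c = 1}"
  have mc: "(\<lambda>\<omega>. \<omega> c) \<in> measurable (P b) (count_space {-1,1::int})" by (rule Pb_comp_meas[OF x(2,3)])
  have Esets: "E \<in> sets (P b)"
  proof -
    have "(\<lambda>\<omega>. \<omega> c) -` {1} \<inter> space (P b) \<in> sets (P b)"
      by (rule measurable_sets[OF mc]) simp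
    moreover have "(\<lambda>\<omega>. \<omega> c) -` {1} \<inter> space (P b) = E" by (auto simp: E_def)
    ultimately show ?thesis by simp
  qed
  have "comp_expect P x = (\<integral>\<omega>. 2 * indicator E \<omega> - 1 \<partial>P b)"
    unfolding comp_expect_def x fst_conv
  proof (intro Bochner_Integration.integral_cong refl)
    fix \<omega> assume "\<omega> \<in> space (P b)"
    hence "\<omega> c \<in> {-1,1}" using Pb(3)[OF x(2)] x(3) by auto
    thus "real_of_int (\<omega> (snd (b, c))) = 2 * indicator E \<omega> - 1"
      using \<open>\<omega> \<in> space (P b)\<close> by (auto simp: E_def indicator_def)
  qed
  also have "\<dots> = 2 * measure (P b) E - 1"
  proof -
    have i1: "integrable (P b) (\<lambda>\<omega>. 2 * indicator E \<omega> :: real)"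
      using Esets by (intro integrable_mult_right integrable_real_indicator) (auto simp: Pb.emeasure_eq_measure)
    have "(\<integral>\<omega>. (2::real) * indicator E \<omega> - 1 \<partial>P b) = (\<integral>\<omega>. (2::real) * indicator E \<omega> \<partial>P b) - (\<integral>\<omega>. 1 \<partial>P b)"
      using i1 by (intro Bochner_Integration.integral_diff) auto
    thus ?thesis using Esets by (simp add: Pb.prob_space)
  qed
  also have "measure (P b) E = measure (comp_dist P x) {1}"
    unfolding comp_dist_def x using measure_distr[OF mc, of "{1}"]
    by (simp add: E_def vimage_def Int_def conj_commute)
  finally show ?thesis .
qed

end


context bsys begin

definition "K = A ` {..<n} \<union> B ` {..<n}"
definition "V = PiE K (\<lambda>_. {-1,1::int})"
definition "Kb b = {c. (b,c) \<in> K}"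
definition "rho b v = (\<lambda>c\<in>Kb b. v (b,c))"
definition "Cw b w = {\<omega>\<in>space (P b). \<forall>c\<in>Kb b. \<omega> c = w c}"
definition "pb b v = measure (P b) (Cw b (rho b v))"
definition "T = fst ` K"
definition "den v = (\<Prod>b\<in>T. pb b v)"
definition "Qset = {q \<in> PiE V (\<lambda>_. {0..1::real}). sum q V = 1 \<and>
   (\<forall>b\<in>Bs. \<forall>v0\<in>V. sum q {v\<in>V. rho b v = rho b v0} = pb b v0)}"
definition "cost q = (\<Sum>i<n. sum q {v\<in>V. v (A i) \<noteq> v (B i)})"
definition "qS S = (\<lambda>v\<in>V. measure S {\<omega>\<in>space S. restrict \<omega> K = v})"

lemma finK: "finite K" by (simp add: K_def)
lemma K_sub: "K \<subseteq> Sigma Bs cmp" unfolding K_def using AB(1,2) by blast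
lemma finV: "finite V" by (simp add: V_def finK finite_PiE)
lemma T_sub: "T \<subseteq> Bs" using K_sub by (auto simp: T_def)
lemma finT: "finite T" by (simp add: T_def finK)
lemma Kb_sub: "Kb b \<subseteq> cmp b" using K_sub by (auto simp: Kb_def)
lemma finKb: "finite (Kb b)"
proof -
  have "Kb b = snd ` (K \<inter> {b} \<times> UNIV)" by (force simp: Kb_def)
  thus ?thesis using finK by simp
qed
lemma Kb_empty: "b \<notin> T \<Longrightarrow> Kb b = {}" by (force simp: Kb_def T_def)
lemma AB_K: "i < n \<Longrightarrow> A i \<in> K" "i < n \<Longrightarrow> B i \<in> K" by (auto simp: K_def)

lemma Cw_sets: assumes "b \<in> Bs" shows "Cw b w \<in> sets (P b)"
proof -
  have "Cw b w = {\<omega>\<in>space (pm_space (cmp b)). \<forall>c\<in>Kb b. \<omega> c = w c}"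
    unfolding Cw_def using sets_eq_imp_space_eq[OF Pb(2)[OF assms]] by simp
  also have "\<dots> \<in> sets (pm_space (cmp b))" by (rule pm_cyl_sets[OF finKb Kb_sub])
  finally show ?thesis using Pb(2)[OF assms] by simp
qed

lemma Cw_space: "Kb b = {} \<Longrightarrow> Cw b w = space (P b)" by (simp add: Cw_def)

lemma pb_nonneg: "0 \<le> pb b v" by (simp add: pb_def)
lemma den_nonneg: "0 \<le> den v" by (simp add: den_def prod_nonneg pb_nonneg)

lemma restrict_K_eq: "v \<in> V \<Longrightarrow> restrict \<omega> K = v \<longleftrightarrow> (\<forall>k\<in>K. \<omega> k = v k)"
  by (auto simp: V_def PiE_iff extensional_def fun_eq_iff)

lemma rho_eq: "rho b u = rho b v \<longleftrightarrow> (\<forall>c\<in>Kb b. u (b,c) = v (b,c))"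
  by (auto simp: rho_def fun_eq_iff restrict_def)

subsection \<open>From couplings to points of Qset\<close>

lemma coup_restrict_V:
  assumes "is_coupling Bs cmp P S" "\<omega> \<in> space S" shows "restrict \<omega> K \<in> V"
  using assms coupling_basic(3)[OF assms(1)] K_sub by (auto simp: V_def PiE_iff)

lemma coup_ev_sets:
  assumes S: "is_coupling Bs cmp P S" and v: "v \<in> V"
  shows "{\<omega>\<in>space S. restrict \<omega> K = v} \<in> sets S"
proof -
  note cb = coupling_basic[OF S]
  have "{\<omega>\<in>space S. restrict \<omega> K = v} = {\<omega>\<in>space Pm. \<forall>k\<in>K. \<omega> k = v k}"
    using sets_eq_imp_space_eq[OF cb(2)] restrict_K_eq[OF v] by simp
  also have "\<dots> \<in> sets Pm" by (rule pm_cyl_sets[OF finK K_sub])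
  finally show ?thesis using cb(2) by simp
qed

lemma event_sum:
  assumes S: "is_coupling Bs cmp P S" and U: "U \<subseteq> V"
  shows "measure S {\<omega>\<in>space S. restrict \<omega> K \<in> U} = (\<Sum>v\<in>U. measure S {\<omega>\<in>space S. restrict \<omega> K = v})"
proof -
  interpret S: prob_space S using coupling_basic(1)[OF S] .
  have "{\<omega>\<in>space S. restrict \<omega> K \<in> U} = (\<Union>v\<in>U. {\<omega>\<in>space S. restrict \<omega> K = v})" by auto
  moreover have "measure S (\<Union>v\<in>U. {\<omega>\<in>space S. restrict \<omega> K = v}) = (\<Sum>v\<in>U. measure S {\<omega>\<in>space S. restrict \<omega> K = v})"
    by (rule measure_finite_Union)
       (use finV U coup_ev_sets[OF S] in \<open>auto simp: disjoint_family_on_def dest: finite_subset\<close>)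
  ultimately show ?thesis by simp
qed

lemma sum_qS: "U \<subseteq> V \<Longrightarrow> sum (qS S) U = (\<Sum>v\<in>U. measure S {\<omega>\<in>space S. restrict \<omega> K = v})"
  by (intro sum.cong) (auto simp: qS_def)

lemma lemmaA:
  assumes S: "is_coupling Bs cmp P S"
  shows "qS S \<in> Qset" "mismatch S A B n = cost (qS S)"
proof -
  note cb = coupling_basic[OF S]
  interpret S: prob_space S using cb(1) .
  have "qS S \<in> PiE V (\<lambda>_. {0..1::real})" by (auto simp: qS_def)
  moreover have "sum (qS S) V = 1"
  proof -
    have "sum (qS S) V = measure S {\<omega>\<in>space S. restrict \<omega> K \<in> V}"
      using sum_qS[of V S] event_sum[OF S, of V] by simp
    also have "{\<omega>\<in>space S. restrict \<omega> K \<in> V} = space S" using coup_restrict_V[OF S] by auto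
    finally show ?thesis by (simp add: S.prob_space)
  qed
  moreover have "sum (qS S) {v\<in>V. rho b v = rho b v0} = pb b v0" if b: "b \<in> Bs" and v0: "v0 \<in> V" for b v0
  proof -
    let ?pr = "\<lambda>\<omega>. \<lambda>c\<in>cmp b. \<omega> (b, c)"
    have "sum (qS S) {v\<in>V. rho b v = rho b v0} = measure S {\<omega>\<in>space S. restrict \<omega> K \<in> {v\<in>V. rho b v = rho b v0}}"
      using sum_qS[of "{v\<in>V. rho b v = rho b v0}" S] event_sum[OF S, of "{v\<in>V. rho b v = rho b v0}"] by simp
    also have "{\<omega>\<in>space S. restrict \<omega> K \<in> {v\<in>V. rho b v = rho b v0}} = ?pr -` Cw b (rho b v0) \<inter> space S"
    proof -
      have "restrict \<omega> K \<in> {v\<in>V. rho b v = rho b v0} \<longleftrightarrow> ?pr \<omega> \<in> Cw b (rho b v0)" if w: "\<omega> \<in> space S" for \<omega>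
      proof -
        have "?pr \<omega> \<in> space (P b)" using w b cb(3) Pb(3)[OF b] by auto
        moreover have "\<forall>c\<in>Kb b. (b,c) \<in> K" by (simp add: Kb_def)
        moreover have "\<forall>c\<in>Kb b. rho b v0 c = v0 (b,c)" by (simp add: rho_def)
        moreover have "\<forall>c\<in>Kb b. c \<in> cmp b" using Kb_sub[of b] by auto
        ultimately show ?thesis using coup_restrict_V[OF S w]
          by (auto simp: rho_eq Cw_def)
      qed
      thus ?thesis by auto
    qed
    also have "measure S (?pr -` Cw b (rho b v0) \<inter> space S) = measure (distr S (pm_space (cmp b)) ?pr) (Cw b (rho b v0))"
      by (rule measure_distr[symmetric, OF proj_meas[OF cb(2) b]]) (use Cw_sets[OF b] Pb(2)[OF b] in auto)
    also have "\<dots> = pb b v0" by (simp add: cb(4)[OF b] pb_def)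
    finally show ?thesis .
  qed
  ultimately show "qS S \<in> Qset" by (auto simp: Qset_def)
  have "measure S {\<omega>\<in>space S. \<omega> (A i) \<noteq> \<omega> (B i)} = sum (qS S) {v\<in>V. v (A i) \<noteq> v (B i)}" if i: "i < n" for i
  proof -
    have "{\<omega>\<in>space S. \<omega> (A i) \<noteq> \<omega> (B i)} = {\<omega>\<in>space S. restrict \<omega> K \<in> {v\<in>V. v (A i) \<noteq> v (B i)}}"
      using coup_restrict_V[OF S] AB_K[OF i] by auto
    thus ?thesis using sum_qS[of "{v\<in>V. v (A i) \<noteq> v (B i)}" S] event_sum[OF S, of "{v\<in>V. v (A i) \<noteq> v (B i)}"] by simp
  qed
  thus "mismatch S A B n = cost (qS S)" by (simp add: mismatch_def cost_def)
qed

end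


context bsys begin

abbreviation "S0 \<equiv> PiM Bs P"
definition "rr \<omega> = (\<lambda>k\<in>K. \<omega> (fst k) (snd k))"
definition "flt \<omega> = (\<lambda>x\<in>Sigma Bs cmp. \<omega> (fst x) (snd x))"
definition "evs v = {\<omega>\<in>space S0. rr \<omega> = v}"

lemma PiM_prob: "prob_space S0" by (rule prob_space_PiM) (use Pb in auto)

lemma space_S0: "space S0 = PiE Bs (\<lambda>b. space (P b))" by (simp add: space_PiM)

lemma S0_coord: "\<omega> \<in> space S0 \<Longrightarrow> (b,c) \<in> Sigma Bs cmp \<Longrightarrow> \<omega> b c \<in> {-1,1}"
  using Pb(3) by (auto simp: space_S0 PiE_iff)

lemma rr_V: "\<omega> \<in> space S0 \<Longrightarrow> rr \<omega> \<in> V"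
  using S0_coord K_sub by (force simp: rr_def V_def PiE_iff)

lemma restrict_flt: "restrict (flt \<omega>) K = rr \<omega>"
  using K_sub by (auto simp: rr_def flt_def fun_eq_iff)

lemma coord_meas: "x \<in> Sigma Bs cmp \<Longrightarrow> (\<lambda>\<omega>. \<omega> (fst x) (snd x)) \<in> measurable S0 (count_space {-1,1::int})"
proof -
  assume x: "x \<in> Sigma Bs cmp"
  have "(\<lambda>\<omega>. \<omega> (fst x)) \<in> measurable S0 (P (fst x))"
    using x by (intro measurable_component_singleton) auto
  moreover have "(\<lambda>f. f (snd x)) \<in> measurable (P (fst x)) (count_space {-1,1::int})"
    using x by (intro Pb_comp_meas) auto
  ultimately show ?thesis by (rule measurable_compose)
qed

lemma flt_meas: "flt \<in> measurable S0 Pm"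
  unfolding flt_def pm_space_def by (rule measurable_restrict) (rule coord_meas)

lemma F1:
  assumes w: "\<omega> \<in> space S0" and v: "v \<in> V"
  shows "rr \<omega> = v \<longleftrightarrow> (\<forall>b\<in>T. \<omega> b \<in> Cw b (rho b v))"
proof -
  have "rr \<omega> = v \<longleftrightarrow> (\<forall>k\<in>K. \<omega> (fst k) (snd k) = v k)"
    using v by (auto simp: rr_def V_def PiE_iff extensional_def fun_eq_iff)
  also have "\<dots> \<longleftrightarrow> (\<forall>b\<in>T. \<omega> b \<in> Cw b (rho b v))"
  proof -
    have "\<omega> b \<in> space (P b)" if "b \<in> T" for b using that w T_sub by (auto simp: space_S0)
    thus ?thesis by (force simp: Cw_def rho_def Kb_def T_def)
  qed
  finally show ?thesis .
qed

lemma F2: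
  assumes J: "J \<subseteq> Bs" "finite J" and X: "\<And>b. b \<in> J \<Longrightarrow> X b \<in> sets (P b)"
  shows "{\<omega>\<in>space S0. \<forall>b\<in>J. \<omega> b \<in> X b} \<in> sets S0"
    "emeasure S0 {\<omega>\<in>space S0. \<forall>b\<in>J. \<omega> b \<in> X b} = (\<Prod>b\<in>J. emeasure (P b) (X b))"
proof -
  have eq: "{\<omega>\<in>space S0. \<forall>b\<in>J. \<omega> b \<in> X b} = prod_emb Bs P J (PiE J X)"
    unfolding prod_emb_def using J by (auto simp: space_PiM PiE_iff extensional_def)
  show "{\<omega>\<in>space S0. \<forall>b\<in>J. \<omega> b \<in> X b} \<in> sets S0"
    unfolding eq using J X by (intro sets_PiM_I) auto
  show "emeasure S0 {\<omega>\<in>space S0. \<forall>b\<in>J. \<omega> b \<in> X b} = (\<Prod>b\<in>J. emeasure (P b) (X b))"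
    unfolding eq by (rule emeasure_PiM_emb) (use Pb J X in auto)
qed

lemma emeasure_Pb: "b \<in> Bs \<Longrightarrow> emeasure (P b) X = ennreal (measure (P b) X)"
  using finite_measure.emeasure_eq_measure[OF prob_space.finite_measure[OF Pb(1)]] by blast

lemma F0:
  assumes v: "v \<in> V"
  shows "evs v \<in> sets S0" "emeasure S0 (evs v) = ennreal (den v)"
proof -
  have eq: "evs v = {\<omega>\<in>space S0. \<forall>b\<in>T. \<omega> b \<in> Cw b (rho b v)}"
    using F1[OF _ v] by (auto simp: evs_def)
  show "evs v \<in> sets S0" unfolding eq
    by (rule F2(1)[OF T_sub finT]) (use Cw_sets T_sub in auto)
  have "emeasure S0 (evs v) = (\<Prod>b\<in>T. emeasure (P b) (Cw b (rho b v)))"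
    unfolding eq by (rule F2(2)[OF T_sub finT]) (use Cw_sets T_sub in auto)
  also have "\<dots> = (\<Prod>b\<in>T. ennreal (pb b v))"
    using T_sub by (intro prod.cong refl) (auto simp: emeasure_Pb pb_def)
  also have "\<dots> = ennreal (den v)" by (simp add: den_def prod_ennreal pb_nonneg)
  finally show "emeasure S0 (evs v) = ennreal (den v)" .
qed

lemma FF:
  assumes b: "b \<in> Bs" and E: "E \<in> sets (P b)" and v: "v \<in> V"
  shows "{\<omega>\<in>space S0. \<omega> b \<in> E} \<inter> evs v \<in> sets S0"
    "emeasure S0 ({\<omega>\<in>space S0. \<omega> b \<in> E} \<inter> evs v) =
       ennreal (measure (P b) (E \<inter> Cw b (rho b v)) * (\<Prod>b'\<in>T-{b}. pb b' v))"
proof -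
  define X where "X b' = (if b' = b then E \<inter> Cw b (rho b v) else Cw b' (rho b' v))" for b'
  have J: "insert b T \<subseteq> Bs" "finite (insert b T)" using b T_sub finT by auto
  have Xs: "X b' \<in> sets (P b')" if "b' \<in> insert b T" for b'
    using that J Cw_sets E by (auto simp: X_def)
  have eq: "{\<omega>\<in>space S0. \<omega> b \<in> E} \<inter> evs v = {\<omega>\<in>space S0. \<forall>b'\<in>insert b T. \<omega> b' \<in> X b'}"
  proof -
    have "(\<omega> b \<in> E \<and> rr \<omega> = v) \<longleftrightarrow> (\<forall>b'\<in>insert b T. \<omega> b' \<in> X b')" if w: "\<omega> \<in> space S0" for \<omega>
    proof (cases "b \<in> T")
      case True
      thus ?thesis using F1[OF w v] by (auto simp: X_def)
    next
      case False
      have "\<omega> b \<in> Cw b (rho b v)" using Cw_space[OF Kb_empty[OF False]] w b by (auto simp: space_S0)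
      thus ?thesis using F1[OF w v] False by (auto simp: X_def)
    qed
    thus ?thesis by (auto simp: evs_def)
  qed
  show "{\<omega>\<in>space S0. \<omega> b \<in> E} \<inter> evs v \<in> sets S0" unfolding eq by (rule F2(1)[OF J Xs])
  have "emeasure S0 ({\<omega>\<in>space S0. \<omega> b \<in> E} \<inter> evs v) = (\<Prod>b'\<in>insert b T. emeasure (P b') (X b'))"
    unfolding eq by (rule F2(2)[OF J Xs])
  also have "\<dots> = emeasure (P b) (X b) * (\<Prod>b'\<in>T - {b}. emeasure (P b') (X b'))"
    using finT by (rule prod.insert_remove)
  also have "\<dots> = ennreal (measure (P b) (E \<inter> Cw b (rho b v))) * (\<Prod>b'\<in>T - {b}. ennreal (pb b' v))"
    using b T_sub by (intro arg_cong2[where f="(*)"] prod.cong refl) (auto simp: X_def emeasure_Pb pb_def)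
  also have "\<dots> = ennreal (measure (P b) (E \<inter> Cw b (rho b v)) * (\<Prod>b'\<in>T-{b}. pb b' v))"
    by (simp add: prod_ennreal pb_nonneg ennreal_mult prod_nonneg)
  finally show "emeasure S0 ({\<omega>\<in>space S0. \<omega> b \<in> E} \<inter> evs v) =
       ennreal (measure (P b) (E \<inter> Cw b (rho b v)) * (\<Prod>b'\<in>T-{b}. pb b' v))" .
qed

lemma den_split:
  assumes b: "b \<in> Bs" shows "den v = pb b v * (\<Prod>b'\<in>T-{b}. pb b' v)"
proof (cases "b \<in> T")
  case True thus ?thesis unfolding den_def using finT by (simp add: prod.remove)
next
  case False
  have "pb b v = 1" using Cw_space[OF Kb_empty[OF False]] prob_space.prob_space[OF Pb(1)[OF b]]
    by (simp add: pb_def)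
  thus ?thesis using False by (simp add: den_def)
qed

end


context bsys begin

lemma q_nn: "q \<in> Qset \<Longrightarrow> v \<in> V \<Longrightarrow> 0 \<le> q v"
  by (auto simp: Qset_def PiE_iff)

lemma q_den0:
  assumes q: "q \<in> Qset" and v: "v \<in> V" and d: "den v = 0"
  shows "q v = 0"
proof -
  obtain b where b: "b \<in> T" "pb b v = 0" using d finT by (auto simp: den_def)
  have bB: "b \<in> Bs" using b T_sub by auto
  have "sum q {v'\<in>V. rho b v' = rho b v} = 0" using q bB v b(2) by (auto simp: Qset_def)
  moreover have "finite {v'\<in>V. rho b v' = rho b v}" using finV by simp
  moreover have "\<forall>v'\<in>{v'\<in>V. rho b v' = rho b v}. 0 \<le> q v'" using q_nn[OF q] by auto
  ultimately have "\<forall>v'\<in>{v'\<in>V. rho b v' = rho b v}. q v' = 0" using sum_nonneg_eq_0_iff by blast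
  thus ?thesis using v by auto
qed

lemma q_term:
  assumes q: "q \<in> Qset" and v: "v \<in> V"
  shows "ennreal (q v / den v) * ennreal (den v) = ennreal (q v)"
proof (cases "den v = 0")
  case True thus ?thesis using q_den0[OF q v] by simp
next
  case False
  have "ennreal (q v / den v * den v) = ennreal (q v / den v) * ennreal (den v)"
    by (rule ennreal_mult) (use q_nn[OF q v] den_nonneg[of v] in auto)
  thus ?thesis using False by simp
qed

definition "G q \<omega> = (\<Sum>v\<in>V. ennreal (q v / den v) * indicator (evs v) \<omega>)"

lemma G_meas: "G q \<in> borel_measurable S0"
  unfolding G_def
  by (intro borel_measurable_sum borel_measurable_times_ennreal borel_measurable_const
        borel_measurable_indicator F0(1))

lemma IG:
  assumes X: "X \<in> sets S0"
  shows "(\<integral>\<^sup>+\<omega>. G q \<omega> * indicator X \<omega> \<partial>S0) = (\<Sum>v\<in>V. ennreal (q v / den v) * emeasure S0 (evs v \<inter> X))"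
proof -
  have "(\<integral>\<^sup>+\<omega>. G q \<omega> * indicator X \<omega> \<partial>S0) = (\<integral>\<^sup>+\<omega>. (\<Sum>v\<in>V. ennreal (q v / den v) * indicator (evs v \<inter> X) \<omega>) \<partial>S0)"
    unfolding G_def by (simp add: sum_distrib_right indicator_inter_arith mult.assoc)
  also have "\<dots> = (\<Sum>v\<in>V. (\<integral>\<^sup>+\<omega>. ennreal (q v / den v) * indicator (evs v \<inter> X) \<omega> \<partial>S0))"
    by (rule nn_integral_sum) (use F0(1) X in auto)
  also have "\<dots> = (\<Sum>v\<in>V. ennreal (q v / den v) * emeasure S0 (evs v \<inter> X))"
    by (intro sum.cong refl nn_integral_cmult_indicator) (use F0(1) X in auto)
  finally show ?thesis .
qed

lemma RC_union:
  assumes b: "b \<in> Bs" and E: "E \<in> sets (P b)"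
  shows "(\<Sum>w\<in>rho b ` V. measure (P b) (E \<inter> Cw b w)) = measure (P b) E"
proof -
  interpret Pb: prob_space "P b" by (rule Pb(1)[OF b])
  have cover: "E = (\<Union>w\<in>rho b ` V. E \<inter> Cw b w)"
  proof
    show "E \<subseteq> (\<Union>w\<in>rho b ` V. E \<inter> Cw b w)"
    proof
      fix \<omega> assume w: "\<omega> \<in> E"
      hence ws: "\<omega> \<in> space (P b)" using sets.sets_into_space[OF E] by auto
      define v where "v = (\<lambda>k\<in>K. if fst k = b then \<omega> (snd k) else 1)"
      have "v \<in> V"
      proof -
        have "\<omega> (snd k) \<in> {-1,1}" if "k \<in> K" "fst k = b" for k
        proof -
          have "snd k \<in> cmp b" using that Kb_sub[of b] by (force simp: Kb_def)
          thus ?thesis using ws Pb(3)[OF b] by auto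
        qed
        thus ?thesis by (auto simp: v_def V_def PiE_iff)
      qed
      moreover have "\<omega> \<in> Cw b (rho b v)" using ws by (auto simp: Cw_def rho_def v_def Kb_def)
      ultimately show "\<omega> \<in> (\<Union>w\<in>rho b ` V. E \<inter> Cw b w)" using w by auto
    qed
  qed auto
  have "measure (P b) (\<Union>w\<in>rho b ` V. E \<inter> Cw b w) = (\<Sum>w\<in>rho b ` V. measure (P b) (E \<inter> Cw b w))"
  proof (rule measure_finite_Union)
    show "finite (rho b ` V)" using finV by simp
    show "(\<lambda>w. E \<inter> Cw b w) ` rho b ` V \<subseteq> sets (P b)" using E Cw_sets[OF b] by auto
    show "disjoint_family_on (\<lambda>w. E \<inter> Cw b w) (rho b ` V)"
    proof (auto simp: disjoint_family_on_def)
      fix v1 v2 \<omega> assume v: "v1 \<in> V" "v2 \<in> V" "rho b v1 \<noteq> rho b v2"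
        "\<omega> \<in> Cw b (rho b v1)" "\<omega> \<in> Cw b (rho b v2)"
      obtain c where c: "c \<in> Kb b" "v1 (b,c) \<noteq> v2 (b,c)" using v(3) by (auto simp: rho_eq)
      thus False using v(4,5) by (auto simp: Cw_def rho_def)
    qed
    show "\<And>i. i \<in> rho b ` V \<Longrightarrow> emeasure (P b) (E \<inter> Cw b i) \<noteq> \<infinity>" by simp
  qed
  thus ?thesis using cover by simp
qed

lemma RC:
  assumes q: "q \<in> Qset" and b: "b \<in> Bs" and E: "E \<in> sets (P b)"
  shows "(\<Sum>v\<in>V. q v / den v * (measure (P b) (E \<inter> Cw b (rho b v)) * (\<Prod>b'\<in>T-{b}. pb b' v)))
          = measure (P b) E"
proof -
  interpret Pb: prob_space "P b" by (rule Pb(1)[OF b])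
  define h where "h w = measure (P b) (E \<inter> Cw b w) / measure (P b) (Cw b w)" for w
  have t: "q v / den v * (measure (P b) (E \<inter> Cw b (rho b v)) * (\<Prod>b'\<in>T-{b}. pb b' v))
           = q v * h (rho b v)" if v: "v \<in> V" for v
  proof (cases "den v = 0")
    case True thus ?thesis using q_den0[OF q v] by simp
  next
    case False
    hence "pb b v \<noteq> 0" "(\<Prod>b'\<in>T-{b}. pb b' v) \<noteq> 0" using den_split[OF b, of v] by auto
    thus ?thesis using den_split[OF b, of v] by (simp add: h_def pb_def field_simps)
  qed
  have "(\<Sum>v\<in>V. q v / den v * (measure (P b) (E \<inter> Cw b (rho b v)) * (\<Prod>b'\<in>T-{b}. pb b' v)))
       = (\<Sum>v\<in>V. q v * h (rho b v))" using t by simp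
  also have "\<dots> = (\<Sum>w\<in>rho b ` V. \<Sum>v\<in>{v\<in>V. rho b v = w}. q v * h (rho b v))"
    using finV by (rule sum.image_gen)
  also have "\<dots> = (\<Sum>w\<in>rho b ` V. measure (P b) (E \<inter> Cw b w))"
  proof (rule sum.cong[OF refl])
    fix w assume "w \<in> rho b ` V"
    then obtain v0 where v0: "v0 \<in> V" "w = rho b v0" by auto
    have "(\<Sum>v\<in>{v\<in>V. rho b v = w}. q v * h (rho b v)) = (\<Sum>v\<in>{v\<in>V. rho b v = w}. q v * h w)"
      by (rule sum.cong) auto
    also have "\<dots> = h w * sum q {v\<in>V. rho b v = rho b v0}" unfolding v0(2) sum_distrib_left by (simp add: mult.commute)
    also have "sum q {v\<in>V. rho b v = rho b v0} = measure (P b) (Cw b w)"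
      using q b v0 by (auto simp: Qset_def pb_def)
    also have "h w * measure (P b) (Cw b w) = measure (P b) (E \<inter> Cw b w)"
    proof (cases "measure (P b) (Cw b w) = 0")
      case True
      have "measure (P b) (E \<inter> Cw b w) \<le> measure (P b) (Cw b w)"
        using Cw_sets[OF b] by (intro Pb.finite_measure_mono) auto
      thus ?thesis using True measure_nonneg[of "P b" "E \<inter> Cw b w"] by (simp add: h_def)
    qed (simp add: h_def)
    finally show "(\<Sum>v\<in>{v\<in>V. rho b v = w}. q v * h (rho b v)) = measure (P b) (E \<inter> Cw b w)" .
  qed
  also have "\<dots> = measure (P b) E" by (rule RC_union[OF b E])
  finally show ?thesis .
qed

end


context bsys begin

lemma comp_sets: "b \<in> Bs \<Longrightarrow> E \<in> sets (P b) \<Longrightarrow> {\<omega>\<in>space S0. \<omega> b \<in> E} \<in> sets S0"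
proof -
  assume b: "b \<in> Bs" and E: "E \<in> sets (P b)"
  have "(\<lambda>\<omega>. \<omega> b) -` E \<inter> space S0 \<in> sets S0"
    by (rule measurable_sets[OF measurable_component_singleton[of b Bs P] E]) (use b in auto)
  moreover have "(\<lambda>\<omega>. \<omega> b) -` E \<inter> space S0 = {\<omega>\<in>space S0. \<omega> b \<in> E}" by auto
  ultimately show ?thesis by simp
qed

lemma comp_meas_pm: "b \<in> Bs \<Longrightarrow> sets M = sets S0 \<Longrightarrow> (\<lambda>\<omega>. \<omega> b) \<in> measurable M (pm_space (cmp b))"
  using measurable_component_singleton[of b Bs P]
  by (simp add: measurable_cong_sets[OF _ Pb(2)] measurable_cong_sets[of M S0])

lemma margin_eq:
  assumes b: "b \<in> Bs" and sM: "sets M = sets S0"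
  shows "distr (distr M Pm flt) (pm_space (cmp b)) (\<lambda>\<omega>. \<lambda>c\<in>cmp b. \<omega> (b, c))
         = distr M (pm_space (cmp b)) (\<lambda>\<omega>. \<omega> b)"
proof -
  have fm: "flt \<in> measurable M Pm" unfolding measurable_cong_sets[OF sM refl] by (rule flt_meas)
  have "distr (distr M Pm flt) (pm_space (cmp b)) (\<lambda>\<omega>. \<lambda>c\<in>cmp b. \<omega> (b, c))
       = distr M (pm_space (cmp b)) ((\<lambda>\<omega>. \<lambda>c\<in>cmp b. \<omega> (b, c)) \<circ> flt)"
    by (rule distr_distr[OF proj_meas[OF refl b] fm])
  also have "\<dots> = distr M (pm_space (cmp b)) (\<lambda>\<omega>. \<omega> b)"
  proof (rule distr_cong[OF refl refl])
    fix \<omega> assume "\<omega> \<in> space M"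
    hence "\<omega> \<in> space S0" using sets_eq_imp_space_eq[OF sM] by simp
    hence "\<omega> b \<in> PiE (cmp b) (\<lambda>_. {-1,1})" using b Pb(3)[OF b] by (auto simp: space_S0)
    thus "((\<lambda>\<omega>. \<lambda>c\<in>cmp b. \<omega> (b, c)) \<circ> flt) \<omega> = \<omega> b"
      using b by (auto simp: flt_def fun_eq_iff PiE_iff extensional_def)
  qed
  finally show ?thesis .
qed

lemma indep_coupling: "is_coupling Bs cmp P (distr S0 Pm flt)"
  unfolding is_coupling_def
proof (intro conjI ballI)
  show "prob_space (distr S0 Pm flt)" by (rule prob_space.prob_space_distr[OF PiM_prob flt_meas])
  show "sets (distr S0 Pm flt) = sets Pm" by simp
  fix b assume b: "b \<in> Bs"
  have "distr (distr S0 Pm flt) (pm_space (cmp b)) (\<lambda>\<omega>. \<lambda>c\<in>cmp b. \<omega> (b, c)) = distr S0 (pm_space (cmp b)) (\<lambda>\<omega>. \<omega> b)"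
    by (rule margin_eq[OF b refl])
  also have "\<dots> = distr S0 (P b) (\<lambda>\<omega>. \<omega> b)" by (rule distr_cong) (use Pb(2)[OF b] in auto)
  also have "\<dots> = P b" by (rule distr_PiM_component) (use Pb b in auto)
  finally show "distr (distr S0 Pm flt) (pm_space (cmp b)) (\<lambda>\<omega>. \<lambda>c\<in>cmp b. \<omega> (b, c)) = P b" .
qed

lemma lemmaB:
  assumes q: "q \<in> Qset"
  shows "is_coupling Bs cmp P (distr (density S0 (G q)) Pm flt)" "qS (distr (density S0 (G q)) Pm flt) = q"
proof -
  define D where "D = density S0 (G q)"
  have sD: "sets D = sets S0" and spD: "space D = space S0" by (auto simp: D_def)
  have evs_sub: "evs v \<subseteq> space S0" for v by (auto simp: evs_def)
  have marg: "emeasure D {\<omega>\<in>space S0. \<omega> b \<in> E} = ennreal (measure (P b) E)"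
    if b: "b \<in> Bs" and E: "E \<in> sets (P b)" for b E
  proof -
    have "emeasure D {\<omega>\<in>space S0. \<omega> b \<in> E} = (\<integral>\<^sup>+\<omega>. G q \<omega> * indicator {\<omega>\<in>space S0. \<omega> b \<in> E} \<omega> \<partial>S0)"
      unfolding D_def by (rule emeasure_density[OF G_meas comp_sets[OF b E]])
    also have "\<dots> = (\<Sum>v\<in>V. ennreal (q v / den v) * emeasure S0 (evs v \<inter> {\<omega>\<in>space S0. \<omega> b \<in> E}))"
      by (rule IG[OF comp_sets[OF b E]])
    also have "\<dots> = (\<Sum>v\<in>V. ennreal (q v / den v * (measure (P b) (E \<inter> Cw b (rho b v)) * (\<Prod>b'\<in>T-{b}. pb b' v))))"
    proof (rule sum.cong[OF refl])
      fix v assume v: "v \<in> V"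
      have e: "evs v \<inter> {\<omega>\<in>space S0. \<omega> b \<in> E} = {\<omega>\<in>space S0. \<omega> b \<in> E} \<inter> evs v" by auto
      show "ennreal (q v / den v) * emeasure S0 (evs v \<inter> {\<omega>\<in>space S0. \<omega> b \<in> E})
          = ennreal (q v / den v * (measure (P b) (E \<inter> Cw b (rho b v)) * (\<Prod>b'\<in>T-{b}. pb b' v)))"
        unfolding e FF(2)[OF b E v]
        by (rule ennreal_mult[symmetric])
           (auto intro!: divide_nonneg_nonneg mult_nonneg_nonneg prod_nonneg simp: q_nn[OF q v] den_nonneg pb_nonneg)
    qed
    also have "\<dots> = ennreal (\<Sum>v\<in>V. q v / den v * (measure (P b) (E \<inter> Cw b (rho b v)) * (\<Prod>b'\<in>T-{b}. pb b' v)))"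
      by (rule sum_ennreal) (use q_nn[OF q] den_nonneg pb_nonneg in \<open>auto intro!: divide_nonneg_nonneg mult_nonneg_nonneg prod_nonneg simp del: times_divide_eq_left\<close>)
    also have "\<dots> = ennreal (measure (P b) E)" by (subst RC[OF q b E]) (rule refl)
    finally show ?thesis .
  qed
  have evq: "emeasure D (evs v0) = ennreal (q v0)" if v0: "v0 \<in> V" for v0
  proof -
    have "emeasure D (evs v0) = (\<integral>\<^sup>+\<omega>. G q \<omega> * indicator (evs v0) \<omega> \<partial>S0)"
      unfolding D_def by (rule emeasure_density[OF G_meas F0(1)[OF v0]])
    also have "\<dots> = (\<Sum>v\<in>V. ennreal (q v / den v) * emeasure S0 (evs v \<inter> evs v0))"
      by (rule IG[OF F0(1)[OF v0]])
    also have "\<dots> = (\<Sum>v\<in>V. if v = v0 then ennreal (q v0) else 0)"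
    proof (rule sum.cong[OF refl])
      fix v assume v: "v \<in> V"
      show "ennreal (q v / den v) * emeasure S0 (evs v \<inter> evs v0) = (if v = v0 then ennreal (q v0) else 0)"
      proof (cases "v = v0")
        case True thus ?thesis using F0(2)[OF v] q_term[OF q v] by simp
      next
        case False
        hence "evs v \<inter> evs v0 = {}" by (auto simp: evs_def)
        thus ?thesis using False by simp
      qed
    qed
    also have "\<dots> = ennreal (q v0)" using v0 finV by simp
    finally show ?thesis .
  qed
  have tot: "emeasure D (space D) = 1"
  proof -
    have "emeasure D (space D) = (\<integral>\<^sup>+\<omega>. G q \<omega> * indicator (space S0) \<omega> \<partial>S0)"
      unfolding D_def by (simp add: emeasure_density[OF G_meas])
    also have "\<dots> = (\<Sum>v\<in>V. ennreal (q v / den v) * emeasure S0 (evs v \<inter> space S0))"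
      by (rule IG) simp
    also have "\<dots> = (\<Sum>v\<in>V. ennreal (q v))"
    proof (rule sum.cong[OF refl])
      fix v assume v: "v \<in> V"
      have "evs v \<inter> space S0 = evs v" using evs_sub by auto
      thus "ennreal (q v / den v) * emeasure S0 (evs v \<inter> space S0) = ennreal (q v)"
        using F0(2)[OF v] q_term[OF q v] by simp
    qed
    also have "\<dots> = ennreal (sum q V)" by (rule sum_ennreal) (use q_nn[OF q] in auto)
    also have "sum q V = 1" using q by (simp add: Qset_def)
    finally show ?thesis by simp
  qed
  interpret D: prob_space D by (rule prob_spaceI[OF tot])
  have fm: "flt \<in> measurable D Pm" unfolding measurable_cong_sets[OF sD refl] by (rule flt_meas)
  show "is_coupling Bs cmp P (distr (density S0 (G q)) Pm flt)"
    unfolding is_coupling_def D_def[symmetric]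
  proof (intro conjI ballI)
    show "prob_space (distr D Pm flt)" by (rule D.prob_space_distr[OF fm])
    show "sets (distr D Pm flt) = sets Pm" by simp
    fix b assume b: "b \<in> Bs"
    have "distr (distr D Pm flt) (pm_space (cmp b)) (\<lambda>\<omega>. \<lambda>c\<in>cmp b. \<omega> (b, c)) = distr D (pm_space (cmp b)) (\<lambda>\<omega>. \<omega> b)"
      by (rule margin_eq[OF b sD])
    also have "\<dots> = P b"
    proof (rule measure_eqI)
      show "sets (distr D (pm_space (cmp b)) (\<lambda>\<omega>. \<omega> b)) = sets (P b)" using Pb(2)[OF b] by simp
      fix E assume "E \<in> sets (distr D (pm_space (cmp b)) (\<lambda>\<omega>. \<omega> b))"
      hence E: "E \<in> sets (pm_space (cmp b))" "E \<in> sets (P b)" using Pb(2)[OF b] by auto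
      have "emeasure (distr D (pm_space (cmp b)) (\<lambda>\<omega>. \<omega> b)) E = emeasure D ((\<lambda>\<omega>. \<omega> b) -` E \<inter> space D)"
        by (rule emeasure_distr[OF comp_meas_pm[OF b sD] E(1)])
      also have "(\<lambda>\<omega>. \<omega> b) -` E \<inter> space D = {\<omega>\<in>space S0. \<omega> b \<in> E}" using spD by auto
      also have "emeasure D {\<omega>\<in>space S0. \<omega> b \<in> E} = emeasure (P b) E"
        using marg[OF b E(2)] emeasure_Pb[OF b] by simp
      finally show "emeasure (distr D (pm_space (cmp b)) (\<lambda>\<omega>. \<omega> b)) E = emeasure (P b) E" .
    qed
    finally show "distr (distr D Pm flt) (pm_space (cmp b)) (\<lambda>\<omega>. \<lambda>c\<in>cmp b. \<omega> (b, c)) = P b" .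
  qed
  show "qS (distr (density S0 (G q)) Pm flt) = q"
    unfolding D_def[symmetric]
  proof (rule ext)
    fix v show "qS (distr D Pm flt) v = q v"
    proof (cases "v \<in> V")
      case False thus ?thesis using q by (auto simp: qS_def Qset_def PiE_iff extensional_def)
    next
      case v: True
      have "{\<omega>\<in>space (distr D Pm flt). restrict \<omega> K = v} = {\<omega>\<in>space Pm. \<forall>k\<in>K. \<omega> k = v k}"
        using restrict_K_eq[OF v] by simp
      hence ss: "{\<omega>\<in>space (distr D Pm flt). restrict \<omega> K = v} \<in> sets Pm"
        using pm_cyl_sets[OF finK K_sub] by simp
      have "qS (distr D Pm flt) v = measure (distr D Pm flt) {\<omega>\<in>space (distr D Pm flt). restrict \<omega> K = v}"
        using v by (simp add: qS_def)
      also have "\<dots> = measure D (flt -` {\<omega>\<in>space (distr D Pm flt). restrict \<omega> K = v} \<inter> space D)"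
        by (rule measure_distr[OF fm ss])
      also have "flt -` {\<omega>\<in>space (distr D Pm flt). restrict \<omega> K = v} \<inter> space D = evs v"
        using measurable_space[OF fm] spD by (auto simp: evs_def restrict_flt)
      also have "measure D (evs v) = q v" using evq[OF v] q_nn[OF q v] by (simp add: measure_def)
      finally show ?thesis .
    qed
  qed
qed

end


context bsys begin

lemma closed_sum_eq: "closed {q::('b \<times> 'c \<Rightarrow> int) \<Rightarrow> real. sum q U = c}"
proof -
  have "continuous_on UNIV (\<lambda>q::('b \<times> 'c \<Rightarrow> int) \<Rightarrow> real. \<Sum>v\<in>U. q v)"
    by (intro continuous_on_sum) simp
  thus ?thesis by (intro closed_Collect_eq) auto
qed

lemma Qset_compact: "compact Qset"
proof -
  have box: "PiE V (\<lambda>_. {0..1::real}) = PiE UNIV (\<lambda>v. if v \<in> V then {0..1} else {undefined})"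
    by (auto simp: PiE_iff extensional_def split: if_splits)
  have "compactin (product_topology (\<lambda>_. euclidean) UNIV) (PiE UNIV (\<lambda>v. if v \<in> V then {0..1::real} else {undefined}))"
    by (subst compactin_PiE) auto
  hence c1: "compact (PiE V (\<lambda>_. {0..1::real}))"
    unfolding box euclidean_product_topology by simp
  have eq: "Qset = PiE V (\<lambda>_. {0..1::real}) \<inter> ({q. sum q V = 1} \<inter>
     (\<Inter>b\<in>Bs. \<Inter>v0\<in>V. {q. sum q {v\<in>V. rho b v = rho b v0} = pb b v0}))"
    by (auto simp: Qset_def)
  show ?thesis unfolding eq
    by (intro compact_Int_closed c1 closed_Int closed_INT ballI closed_sum_eq)
qed

lemma cost_cont: "continuous_on Qset cost"
proof -
  have ce: "cost = (\<lambda>q. \<Sum>i<n. \<Sum>v\<in>{v\<in>V. v (A i) \<noteq> v (B i)}. q v)"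
    by (rule ext) (simp add: cost_def)
  have "continuous_on UNIV (\<lambda>q::('b \<times> 'c \<Rightarrow> int) \<Rightarrow> real. \<Sum>i<n. \<Sum>v\<in>{v\<in>V. v (A i) \<noteq> v (B i)}. q v)"
    by (intro continuous_on_sum) simp
  hence "continuous_on UNIV (cost :: (('b \<times> 'c \<Rightarrow> int) \<Rightarrow> real) \<Rightarrow> real)" by (simp add: ce)
  thus ?thesis by (rule continuous_on_subset) simp
qed

lemma opt_exists:
  "\<exists>S. is_coupling Bs cmp P S \<and> (\<forall>S'. is_coupling Bs cmp P S' \<longrightarrow> mismatch S A B n \<le> mismatch S' A B n)"
proof -
  have "Qset \<noteq> {}" using lemmaA(1)[OF indep_coupling] by auto
  then obtain q where q: "q \<in> Qset" "\<forall>y\<in>Qset. cost q \<le> cost y"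
    using continuous_attains_inf[OF Qset_compact _ cost_cont] by blast
  define S where "S = distr (density S0 (G q)) Pm flt"
  have S: "is_coupling Bs cmp P S" "qS S = q" using lemmaB[OF q(1)] by (auto simp: S_def)
  have "mismatch S A B n \<le> mismatch S' A B n" if "is_coupling Bs cmp P S'" for S'
    using lemmaA[OF that] lemmaA(2)[OF S(1)] S(2) q(2) by auto
  thus ?thesis using S(1) by blast
qed

end

theorem theorem27:
  fixes Bs :: "'b set" and cmp :: "'b \<Rightarrow> 'c set"
    and P :: "'b \<Rightarrow> ('c \<Rightarrow> int) measure"
    and A B :: "nat \<Rightarrow> 'b \<times> 'c" and n :: nat
  assumes "binary_system Bs cmp P A B n"
  shows "(\<exists>S. is_coupling Bs cmp P S \<and> mismatch S A B n = Delta_min Bs cmp P A B n)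
       \<and> Delta_min Bs cmp P A B n \<ge> Delta0 P A B n
       \<and> (noncontextual Bs cmp P A B n \<longleftrightarrow> Delta_min Bs cmp P A B n = Delta0 P A B n)"
proof -
  interpret bsys Bs cmp P A B n by unfold_locales (rule assms)
  obtain S where S: "is_coupling Bs cmp P S"
      "\<And>S'. is_coupling Bs cmp P S' \<Longrightarrow> mismatch S A B n \<le> mismatch S' A B n"
    using opt_exists by blast
  have DM: "Delta_min Bs cmp P A B n = mismatch S A B n"
    unfolding Delta_min_def by (rule cInf_eq_minimum) (use S in auto)
  define a where "a i = measure (comp_dist P (A i)) {1}" for i
  define bb where "bb i = measure (comp_dist P (B i)) {1}" for i
  have D0: "Delta0 P A B n = (\<Sum>i<n. \<bar>a i - bb i\<bar>)"
  proof -
    have "\<bar>comp_expect P (A i) - comp_expect P (B i)\<bar> = 2 * \<bar>a i - bb i\<bar>" if "i < n" for i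
    proof -
      have e2: "comp_expect P (A i) - comp_expect P (B i) = 2 * (a i - bb i)"
        using comp_expect_eq[OF AB(1)[OF that]] comp_expect_eq[OF AB(2)[OF that]]
        by (simp add: a_def bb_def algebra_simps)
      show ?thesis unfolding e2 abs_mult by simp
    qed
    hence "(\<Sum>i<n. \<bar>comp_expect P (A i) - comp_expect P (B i)\<bar>) = (\<Sum>i<n. 2 * \<bar>a i - bb i\<bar>)"
      by (intro sum.cong) auto
    thus ?thesis by (simp add: Delta0_def sum_distrib_left[symmetric])
  qed
  have term_lb: "\<bar>a i - bb i\<bar> \<le> measure S' {\<omega>\<in>space S'. \<omega> (A i) \<noteq> \<omega> (B i)}"
    if S': "is_coupling Bs cmp P S'" and i: "i < n" for S' i
    using pc_bound[OF pair_dist_pc(1)[OF S' AB(1,2)[OF i]]] pair_dist_pc(2)[OF S' AB(1,2)[OF i]]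
    by (simp add: a_def bb_def)
  have lb: "Delta0 P A B n \<le> mismatch S' A B n" if S': "is_coupling Bs cmp P S'" for S'
    unfolding D0 mismatch_def by (rule sum_mono) (use term_lb[OF S'] in auto)
  have maxiff: "maximal_coupling (comp_dist P (A i)) (comp_dist P (B i)) (pair_dist S' (A i) (B i))
       \<longleftrightarrow> measure S' {\<omega>\<in>space S'. \<omega> (A i) \<noteq> \<omega> (B i)} = \<bar>a i - bb i\<bar>"
    if S': "is_coupling Bs cmp P S'" and i: "i < n" for S' i
    using maximal_iff[OF comp_dist_basic[OF AB(1)[OF i]] comp_dist_basic[OF AB(2)[OF i]],
        of "pair_dist S' (A i) (B i)"]
      pair_dist_pc[OF S' AB(1,2)[OF i]] by (simp add: a_def bb_def)
  show ?thesis
  proof (intro conjI)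
    show "\<exists>S. is_coupling Bs cmp P S \<and> mismatch S A B n = Delta_min Bs cmp P A B n"
      using S(1) DM by auto
    show "Delta0 P A B n \<le> Delta_min Bs cmp P A B n" using DM lb[OF S(1)] by simp
    show "noncontextual Bs cmp P A B n \<longleftrightarrow> Delta_min Bs cmp P A B n = Delta0 P A B n"
    proof
      assume "noncontextual Bs cmp P A B n"
      then obtain S' where S': "is_coupling Bs cmp P S'"
        "\<forall>i<n. maximal_coupling (comp_dist P (A i)) (comp_dist P (B i)) (pair_dist S' (A i) (B i))"
        unfolding noncontextual_def by blast
      have "mismatch S' A B n = Delta0 P A B n"
        unfolding D0 mismatch_def by (rule sum.cong) (use S' maxiff in auto)
      thus "Delta_min Bs cmp P A B n = Delta0 P A B n"
        using DM S(2)[OF S'(1)] lb[OF S(1)] by simp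
    next
      assume eq: "Delta_min Bs cmp P A B n = Delta0 P A B n"
      have "measure S {\<omega>\<in>space S. \<omega> (A i) \<noteq> \<omega> (B i)} = \<bar>a i - bb i\<bar>" if i: "i < n" for i
      proof -
        have eqs: "(\<Sum>i<n. \<bar>a i - bb i\<bar>) = (\<Sum>i<n. measure S {\<omega>\<in>space S. \<omega> (A i) \<noteq> \<omega> (B i)})"
          using eq DM D0 by (simp add: mismatch_def)
        have le: "\<And>j. j \<in> {..<n} \<Longrightarrow> \<bar>a j - bb j\<bar> \<le> measure S {\<omega>\<in>space S. \<omega> (A j) \<noteq> \<omega> (B j)}"
          using term_lb[OF S(1)] by simp
        have "\<bar>a i - bb i\<bar> = measure S {\<omega>\<in>space S. \<omega> (A i) \<noteq> \<omega> (B i)}"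
          by (rule sum_mono_inv[OF eqs le]) (use i in auto)
        thus ?thesis by simp
      qed
      hence "\<forall>i<n. maximal_coupling (comp_dist P (A i)) (comp_dist P (B i)) (pair_dist S (A i) (B i))"
        using maxiff[OF S(1)] by simp
      thus "noncontextual Bs cmp P A B n"
        unfolding noncontextual_def using S(1) by blast
    qed
  qed
qed


end
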